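(* Let $S\subset\mathbb{R}^n$ be a set of positive Lebesgue measure and let $P,Q$ be two matrix-valued polynomials on $\mathbb{R}^n$. Suppose that there exists $s$ such that $\operatorname{rank}P(\xi)+\operatorname{rank}Q(\xi)=s$ for all $\xi\in S$. Then both $P$ and $Q$ have constant rank on $S$, i.e. $\xi\mapsto\operatorname{rank}P(\xi)$ and $\xi\mapsto\operatorname{rank}Q(\xi)$ are constant on $S$.
   Context: A matrix-valued polynomial on $\mathbb{R}^n$ is a map $\mathbb{R}^n\to\mathbb{R}^{N\times m}$ each of whose entries is a polynomial in $\xi\in\mathbb{R}^n$. *)

theory Defs
  imports "HOL-Analysis.Analysis"
begin

text \<open>A real polynomial function on R^n (n = CARD('n)): a finite linear combination
  of monomials x_1^a_1 ... x_n^a_n, with multi-indices a :: 'n => nat.\<close>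
definition poly_fun :: "(real^'n \<Rightarrow> real) \<Rightarrow> bool" where
  "poly_fun f \<longleftrightarrow> (\<exists>E c. finite E \<and>
     (\<forall>x. f x = (\<Sum>\<alpha>\<in>E. c \<alpha> * (\<Prod>i\<in>UNIV. (x $ i) ^ (\<alpha> i)))))"

text \<open>A matrix-valued polynomial R^n -> R^(N x m): every entry is a polynomial.\<close>
definition matrix_poly :: "(real^'n \<Rightarrow> real^'m^'k) \<Rightarrow> bool" where
  "matrix_poly P \<longleftrightarrow> (\<forall>i j. poly_fun (\<lambda>x. P x $ i $ j))"

end

theory Submission
  imports Defs
begin


inductive pf :: "nat \<Rightarrow> (real^'n \<Rightarrow> real) \<Rightarrow> bool" where
  pf_const: "pf d (\<lambda>x. c)"
| pf_coord: "1 \<le> d \<Longrightarrow> pf d (\<lambda>x. x$i)"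
| pf_add: "pf d f \<Longrightarrow> pf d g \<Longrightarrow> pf d (\<lambda>x. f x + g x)"
| pf_mul: "pf d f \<Longrightarrow> pf e g \<Longrightarrow> pf (d+e) (\<lambda>x. f x * g x)"

lemma pf_mono: "pf d f \<Longrightarrow> d \<le> e \<Longrightarrow> pf e f"
proof (induction arbitrary: e rule: pf.induct)
  case (pf_mul d f e' g)
  have "pf d f" using pf_mul by simp
  moreover have "pf (e - d) g" using pf_mul by simp
  ultimately have "pf (d + (e - d)) (\<lambda>x. f x * g x)" by (rule pf.pf_mul)
  then show ?case using pf_mul by simp
qed (auto intro: pf.intros)

lemma pf_const0: "pf d f \<Longrightarrow> d = 0 \<Longrightarrow> \<exists>c. f = (\<lambda>x. c)"
proof (induction rule: pf.induct)
  case (pf_add d f g)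
  then show ?case by force
next
  case (pf_mul d f e g)
  then show ?case by force
qed auto

lemma pf_deriv: "pf d f \<Longrightarrow> \<exists>D. (\<forall>i. pf (d-1) (D i)) \<and> (d = 0 \<longrightarrow> (\<forall>i. D i = (\<lambda>x. 0))) \<and>
   (\<forall>x. (f has_derivative (\<lambda>h. \<Sum>i\<in>UNIV. h$i * D i x)) (at x))"
proof (induction rule: pf.induct)
  case (pf_const d c)
  show ?case
    by (rule exI[of _ "\<lambda>i x. 0"]) (auto intro: pf.intros)
next
  case (pf_coord d i)
  have "(\<lambda>h::real^'a. \<Sum>j\<in>UNIV. h$j * (if j = i then 1 else 0)) = (\<lambda>h. h$i)"
    by (simp add: if_distrib cong: if_cong)
  moreover have "\<And>x. ((\<lambda>x::real^'a. x$i) has_derivative (\<lambda>h. h$i)) (at x)"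
    by (rule bounded_linear_imp_has_derivative[OF bounded_linear_vec_nth])
  ultimately show ?case using pf_coord
    by (intro exI[of _ "\<lambda>j x. if j = i then 1 else 0"]) (auto intro: pf.intros)
next
  case (pf_add d f g)
  then obtain Df Dg where f: "\<forall>i. pf (d-1) (Df i)" "d = 0 \<longrightarrow> (\<forall>i. Df i = (\<lambda>x. 0))"
      "\<forall>x. (f has_derivative (\<lambda>h. \<Sum>i\<in>UNIV. h$i * Df i x)) (at x)"
    and g: "\<forall>i. pf (d-1) (Dg i)" "d = 0 \<longrightarrow> (\<forall>i. Dg i = (\<lambda>x. 0))"
      "\<forall>x. (g has_derivative (\<lambda>h. \<Sum>i\<in>UNIV. h$i * Dg i x)) (at x)" by blast
  show ?case
  proof (intro exI[of _ "\<lambda>i x. Df i x + Dg i x"] conjI allI impI)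
    fix i show "pf (d-1) (\<lambda>x. Df i x + Dg i x)" using f g by (auto intro: pf.intros)
  next
    fix i assume "d = 0" then show "(\<lambda>x. Df i x + Dg i x) = (\<lambda>x. 0)" using f g by auto
  next
    fix x
    have "((\<lambda>x. f x + g x) has_derivative (\<lambda>h. (\<Sum>i\<in>UNIV. h$i * Df i x) + (\<Sum>i\<in>UNIV. h$i * Dg i x))) (at x)"
      using f g by (auto intro: has_derivative_add)
    then show "((\<lambda>x. f x + g x) has_derivative (\<lambda>h. \<Sum>i\<in>UNIV. h$i * (Df i x + Dg i x))) (at x)"
      by (simp add: distrib_left sum.distrib)
  qed
next
  case (pf_mul d f e g)
  then obtain Df Dg where f: "\<forall>i. pf (d-1) (Df i)" "d = 0 \<longrightarrow> (\<forall>i. Df i = (\<lambda>x. 0))"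
      "\<forall>x. (f has_derivative (\<lambda>h. \<Sum>i\<in>UNIV. h$i * Df i x)) (at x)"
    and g: "\<forall>i. pf (e-1) (Dg i)" "e = 0 \<longrightarrow> (\<forall>i. Dg i = (\<lambda>x. 0))"
      "\<forall>x. (g has_derivative (\<lambda>h. \<Sum>i\<in>UNIV. h$i * Dg i x)) (at x)" by blast
  have der: "((\<lambda>x. f x * g x) has_derivative (\<lambda>h. \<Sum>i\<in>UNIV. h$i * (Df i x * g x + f x * Dg i x))) (at x)" for x
  proof -
    have "((\<lambda>x. f x * g x) has_derivative (\<lambda>h. f x * (\<Sum>i\<in>UNIV. h$i * Dg i x) + (\<Sum>i\<in>UNIV. h$i * Df i x) * g x)) (at x)"
      using f g by (auto intro: has_derivative_mult)
    moreover have "(\<lambda>h. f x * (\<Sum>i\<in>UNIV. h$i * Dg i x) + (\<Sum>i\<in>UNIV. h$i * Df i x) * g x)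
        = (\<lambda>h. \<Sum>i\<in>UNIV. h$i * (Df i x * g x + f x * Dg i x))"
    proof
      fix h :: "real^'a"
      show "f x * (\<Sum>i\<in>UNIV. h$i * Dg i x) + (\<Sum>i\<in>UNIV. h$i * Df i x) * g x
        = (\<Sum>i\<in>UNIV. h$i * (Df i x * g x + f x * Dg i x))"
        unfolding sum_distrib_left sum_distrib_right sum.distrib[symmetric]
        by (rule sum.cong) (simp_all add: algebra_simps)
    qed
    ultimately show ?thesis by simp
  qed
  show ?case
  proof (cases "d = 0")
    case True
    then have eq: "(\<lambda>i x. Df i x * g x + f x * Dg i x) = (\<lambda>i x. f x * Dg i x)" using f by auto
    obtain c where c: "f = (\<lambda>x. c)" using pf_const0 pf_mul True by blast
    show ?thesis
    proof (intro exI[of _ "\<lambda>i x. f x * Dg i x"] conjI allI impI)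
      fix i show "pf (d + e - 1) (\<lambda>x. f x * Dg i x)"
        using pf.pf_mul[OF pf.pf_const[of 0 c] g(1)[rule_format, of i]] c True by simp
    next
      fix i assume "d + e = 0" then have "Dg i = (\<lambda>x. 0)" using g(2) by simp
      then show "(\<lambda>x. f x * Dg i x) = (\<lambda>x. 0)" by simp
    next
      fix x show "((\<lambda>x. f x * g x) has_derivative (\<lambda>h. \<Sum>i\<in>UNIV. h $ i * (f x * Dg i x))) (at x)"
        using der[of x] f(2) True by simp
    qed
  next
    case dpos: False
    show ?thesis
    proof (cases "e = 0")
      case True
      then have eq: "(\<lambda>i x. Df i x * g x + f x * Dg i x) = (\<lambda>i x. Df i x * g x)" using g by auto
      obtain c where c: "g = (\<lambda>x. c)" using pf_const0 pf_mul True by blast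
      show ?thesis
      proof (intro exI[of _ "\<lambda>i x. Df i x * g x"] conjI allI impI)
        fix i show "pf (d + e - 1) (\<lambda>x. Df i x * g x)"
          using pf.pf_mul[OF f(1)[rule_format, of i] pf.pf_const[of 0 c]] c True by simp
      next
        fix i assume "d + e = 0" then have "Df i = (\<lambda>x. 0)" using f(2) by simp
        then show "(\<lambda>x. Df i x * g x) = (\<lambda>x. 0)" by simp
      next
        fix x show "((\<lambda>x. f x * g x) has_derivative (\<lambda>h. \<Sum>i\<in>UNIV. h $ i * (Df i x * g x))) (at x)"
          using der[of x] g(2) True by simp
      qed
    next
      case epos: False
      show ?thesis
      proof (intro exI[of _ "\<lambda>i x. Df i x * g x + f x * Dg i x"] conjI allI impI)
        fix i
        have 1: "pf (d - 1 + e) (\<lambda>x. Df i x * g x)"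
          using pf.pf_mul[OF f(1)[rule_format, of i] pf_mul(2)] .
        have 2: "pf (d + (e - 1)) (\<lambda>x. f x * Dg i x)"
          using pf.pf_mul[OF pf_mul(1) g(1)[rule_format, of i]] .
        show "pf (d + e - 1) (\<lambda>x. Df i x * g x + f x * Dg i x)"
          using dpos epos 1 2 by (intro pf.pf_add) (simp_all add: add.commute)
      next
        fix i assume "d + e = 0" then show "(\<lambda>x. Df i x * g x + f x * Dg i x) = (\<lambda>x. 0)" using dpos by auto
      next
        fix x show "((\<lambda>x. f x * g x) has_derivative (\<lambda>h. \<Sum>i\<in>UNIV. h $ i * (Df i x * g x + f x * Dg i x))) (at x)"
          using der[of x] .
      qed
    qed
  qed
qed


lemma key_null:
  fixes F :: "real^'n \<Rightarrow> real"
  assumes der: "\<forall>x. (F has_derivative (\<lambda>h. \<Sum>j\<in>UNIV. h$j * D j x)) (at x)"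
  shows "negligible {x. D i x \<noteq> 0 \<and> F x = 0}"
proof -
  define \<Phi> where "\<Phi> x = x + (F x - x$i) *\<^sub>R (axis i 1 :: real^'n)" for x
  define \<Phi>' where "\<Phi>' x h = h + ((\<Sum>j\<in>UNIV. h$j * D j x) - h$i) *\<^sub>R (axis i 1 :: real^'n)" for x h
  have d: "(\<Phi> has_derivative \<Phi>' x) (at x within S)" for x S
  proof -
    have "((\<lambda>x::real^'n. x$i) has_derivative (\<lambda>h. h$i)) (at x within S)"
      by (rule bounded_linear_imp_has_derivative[OF bounded_linear_vec_nth])
    moreover have "(F has_derivative (\<lambda>h. \<Sum>j\<in>UNIV. h$j * D j x)) (at x within S)"
      using der has_derivative_at_withinI by blast
    ultimately show ?thesis
      unfolding \<Phi>_def[abs_def] \<Phi>'_def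
      by (intro derivative_intros) auto
  qed
  have inj: "inj (\<Phi>' x)" if nz: "D i x \<noteq> 0" for x
  proof (rule injI)
    fix a b assume eq: "\<Phi>' x a = \<Phi>' x b"
    have oth: "a$j = b$j" if "j \<noteq> i" for j
      using arg_cong[OF eq, of "\<lambda>v. v$j"] that by (simp add: \<Phi>'_def axis_def)
    have "(\<Sum>j\<in>UNIV. a$j * D j x) = (\<Sum>j\<in>UNIV. b$j * D j x)"
      using arg_cong[OF eq, of "\<lambda>v. v$i"] by (simp add: \<Phi>'_def axis_def)
    then have "(\<Sum>j\<in>UNIV. (a$j - b$j) * D j x) = 0"
      by (simp add: left_diff_distrib sum_subtractf)
    moreover have "(\<Sum>j\<in>UNIV. (a$j - b$j) * D j x) = (a$i - b$i) * D i x"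
    proof -
      have "(\<Sum>j\<in>UNIV. (a$j - b$j) * D j x) = (\<Sum>j\<in>UNIV. if j = i then (a$i - b$i) * D i x else 0)"
        by (rule sum.cong) (auto simp: oth)
      then show ?thesis by simp
    qed
    ultimately have "a$i = b$i" using nz by simp
    with oth show "a = b" by (metis vec_eq_iff)
  qed
  have "negligible {x \<in> {x. D i x \<noteq> 0}. \<Phi> x \<in> {y. y$i = 0}}"
    by (rule negligible_differentiable_vimage[OF negligible_standard_hyperplane_cart inj d]) auto
  moreover have "{x \<in> {x. D i x \<noteq> 0}. \<Phi> x \<in> {y. y$i = 0}} = {x. D i x \<noteq> 0 \<and> F x = 0}"
    by (auto simp: \<Phi>_def axis_def)
  ultimately show ?thesis by simp
qed

lemma pf_null: "pf d f \<Longrightarrow> (\<exists>x. f x \<noteq> 0) \<Longrightarrow> negligible {x. f x = 0}"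
proof (induction d arbitrary: f)
  case 0
  then obtain c where "f = (\<lambda>x. c)" using pf_const0 by blast
  with 0 show ?case by auto
next
  case (Suc d)
  obtain D where D: "\<forall>i. pf d (D i)"
     "\<forall>x. (f has_derivative (\<lambda>h. \<Sum>i\<in>UNIV. h$i * D i x)) (at x)"
    using pf_deriv[OF Suc.prems(1)] by auto
  show ?case
  proof (cases "\<forall>i x. D i x = 0")
    case True
    then have "\<forall>x. (f has_derivative (\<lambda>h. 0)) (at x within UNIV)" using D(2) by simp
    then obtain c where "\<forall>x\<in>UNIV. f x = c"
      using has_derivative_zero_constant[of UNIV f] by auto
    with Suc.prems(2) show ?thesis by auto
  next
    case False
    then obtain j x0 where "D j x0 \<noteq> 0" by auto
    then have n1: "negligible {x. D j x = 0}" using Suc.IH D(1) by blast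
    have n2: "negligible (\<Union>i\<in>UNIV. {x. D i x \<noteq> 0 \<and> f x = 0})"
      using key_null[OF D(2)] by (intro negligible_Union) (auto simp del: Collect_ball_eq)
    have "{x. f x = 0} \<subseteq> {x. D j x = 0} \<union> (\<Union>i\<in>UNIV. {x. D i x \<noteq> 0 \<and> f x = 0})"
      by auto
    moreover have "negligible ({x. D j x = 0} \<union> (\<Union>i\<in>UNIV. {x. D i x \<noteq> 0 \<and> f x = 0}))"
      using n1 n2 by (rule negligible_Un)
    ultimately show ?thesis by (rule negligible_subset[rotated])
  qed
qed



lemma nullity_rank:
  fixes A :: "real^'m^'k"
  shows "dim {v. A *v v = 0} + rank A = CARD('m)"
proof -
  have lin: "linear ((*v) (transpose A))" by (rule matrix_vector_mul_linear)
  have h1: "dim {y \<in> UNIV. \<forall>x \<in> range ((*v) (transpose A)). orthogonal x y} + dim (range ((*v) (transpose A)))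
        = dim (UNIV :: (real^'m) set)" 
    by (rule dim_subspace_orthogonal_to_vectors[OF linear_subspace_image[OF lin subspace_UNIV] subspace_UNIV]) simp
  have h2: "{y \<in> UNIV. \<forall>x \<in> range ((*v) (transpose A)). orthogonal x y} = {v. A *v v = 0}"
  proof (rule set_eqI, rule iffI)
    fix y assume "y \<in> {y \<in> UNIV. \<forall>x \<in> range ((*v) (transpose A)). orthogonal x y}"
    then have "orthogonal (transpose A *v (A *v y)) y" by auto
    then have "(A *v y) \<bullet> (A *v y) = 0" by (simp add: orthogonal_def dot_lmul_matrix)
    then show "y \<in> {v. A *v v = 0}" by simp
  next
    fix y assume "y \<in> {v. A *v v = 0}"
    then show "y \<in> {y \<in> UNIV. \<forall>x \<in> range ((*v) (transpose A)). orthogonal x y}"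
      by (auto simp: orthogonal_def dot_lmul_matrix)
  qed
  have h3: "dim (range ((*v) (transpose A))) = rank A"
    using rank_dim_range[of "transpose A"] rank_transpose[of A] by simp
  have h4: "dim (UNIV::(real^'m) set) = CARD('m)" by simp
  show ?thesis using h1 unfolding h2 h3 h4 .
qed


lemma det_nz_iff_kernel:
  fixes M :: "real^'m^'m"
  shows "det M \<noteq> 0 \<longleftrightarrow> (\<forall>v. M *v v = 0 \<longrightarrow> v = 0)"
proof -
  have "det M \<noteq> 0 \<longleftrightarrow> inj ((*v) M)"
    by (simp add: invertible_det_nz[symmetric] invertible_left_inverse matrix_left_invertible_injective)
  also have "\<dots> \<longleftrightarrow> (\<forall>v. M *v v = 0 \<longrightarrow> v = 0)"
  proof
    assume inj: "inj ((*v) M)"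
    show "\<forall>v. M *v v = 0 \<longrightarrow> v = 0"
    proof (intro allI impI)
      fix v :: "real^'m" assume "M *v v = 0"
      then have "M *v v = M *v 0" by simp
      then show "v = 0" by (rule injD[OF inj])
    qed
  next
    assume h: "\<forall>v. M *v v = 0 \<longrightarrow> v = 0"
    show "inj ((*v) M)"
    proof (rule injI)
      fix a b assume "M *v a = M *v b"
      then have "M *v (a - b) = 0" by (simp add: matrix_vector_mult_diff_distrib)
      then have "a - b = 0" using h by blast
      then show "a = b" by simp
    qed
  qed
  finally show ?thesis .
qed

lemma rank_det:
  fixes A0 :: "real^'m^'k"
  obtains C :: "real^'m^'m" where "det (transpose A0 ** A0 + C) \<noteq> 0"
    and "\<And>A::real^'m^'k. rank A < rank A0 \<Longrightarrow> det (transpose A ** A + C) = 0"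
proof -
  define K where "K = {v. A0 *v v = 0}"
  have subK: "subspace K" unfolding K_def
    by (rule linear_subspace_kernel[OF matrix_vector_mul_linear])
  obtain B where B: "B \<subseteq> K" "independent B" "K \<subseteq> span B" "card B = dim K" by (rule basis_exists)
  have finB: "finite B" using B(2) by (rule finiteI_independent)
  define C :: "real^'m^'m" where "C = (\<chi> i j. \<Sum>b\<in>B. b$i * b$j)"
  have Cv: "C *v v = (\<Sum>b\<in>B. (b \<bullet> v) *\<^sub>R b)" for v
  proof (subst vec_eq_iff, intro allI)
    fix i
    have "(C *v v) $ i = (\<Sum>j\<in>UNIV. (\<Sum>b\<in>B. b$i * b$j) * v$j)"
      by (simp add: C_def matrix_vector_mult_def)
    also have "\<dots> = (\<Sum>b\<in>B. \<Sum>j\<in>UNIV. b$i * b$j * v$j)"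
      by (simp add: sum_distrib_right sum.swap[of _ UNIV B])
    also have "\<dots> = (\<Sum>b\<in>B. (b \<bullet> v) * b$i)"
      by (simp add: inner_vec_def sum_distrib_left sum_distrib_right mult_ac)
    also have "\<dots> = (\<Sum>b\<in>B. (b \<bullet> v) *\<^sub>R b) $ i"
      by (simp add: sum_component)
    finally show "(C *v v) $ i = (\<Sum>b\<in>B. (b \<bullet> v) *\<^sub>R b) $ i" .
  qed
  have Gv: "(transpose A ** A + C) *v v = transpose A *v (A *v v) + C *v v" for A :: "real^'m^'k" and v
    by (simp only: matrix_vector_mult_add_rdistrib matrix_vector_mul_assoc)
  have quad: "v \<bullet> ((transpose A ** A + C) *v v) = (A *v v) \<bullet> (A *v v) + (\<Sum>b\<in>B. (b \<bullet> v)^2)"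
    for A :: "real^'m^'k" and v
  proof -
    have "v \<bullet> (transpose A *v (A *v v)) = (A *v v) \<bullet> (A *v v)"
      by (simp only: transpose_matrix_vector inner_commute[of v] dot_lmul_matrix)
    moreover have "v \<bullet> (C *v v) = (\<Sum>b\<in>B. (b \<bullet> v)^2)"
      by (simp add: Cv inner_sum_right power2_eq_square inner_commute)
    ultimately show ?thesis by (simp add: Gv inner_add_right)
  qed
  have P1: "det (transpose A0 ** A0 + C) \<noteq> 0"
    unfolding det_nz_iff_kernel
  proof (intro allI impI)
    fix v assume h: "(transpose A0 ** A0 + C) *v v = 0"
    have "(A0 *v v) \<bullet> (A0 *v v) + (\<Sum>b\<in>B. (b \<bullet> v)^2) = 0"
      using quad[where A=A0 and v=v] h by simp
    moreover have "0 \<le> (A0 *v v) \<bullet> (A0 *v v)" by simp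
    moreover have "0 \<le> (\<Sum>b\<in>B. (b \<bullet> v)^2)" by (simp add: sum_nonneg)
    ultimately have z1: "(A0 *v v) \<bullet> (A0 *v v) = 0" and z2: "(\<Sum>b\<in>B. (b \<bullet> v)^2) = 0"
      by linarith+
    from z1 have "v \<in> K" by (simp add: K_def)
    then have vs: "v \<in> span B" using B(3) by blast
    from z2 have "\<forall>b\<in>B. (b \<bullet> v)^2 = 0" using finB by (simp add: sum_nonneg_eq_0_iff)
    then have "\<And>y. y \<in> B \<Longrightarrow> orthogonal v y" by (simp add: orthogonal_def inner_commute)
    then have "orthogonal v v" using orthogonal_to_span[OF vs] by blast
    then show "v = 0" by (simp add: orthogonal_def)
  qed
  have P2: "det (transpose A ** A + C) = 0" if lt: "rank A < rank A0" for A :: "real^'m^'k"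
  proof -
    define N where "N = {v. A *v v = 0}"
    define W where "W = {y. \<forall>x\<in>K. orthogonal x y}"
    have subN: "subspace N" unfolding N_def
      by (rule linear_subspace_kernel[OF matrix_vector_mul_linear])
    have subW: "subspace W"
    proof -
      have "W = orthogonal_comp K" by (simp add: W_def orthogonal_comp_def)
      then show ?thesis by (simp add: subspace_orthogonal_comp)
    qed
    have dN: "dim N + rank A = CARD('m)" unfolding N_def by (rule nullity_rank)
    have dK: "dim K + rank A0 = CARD('m)" unfolding K_def by (rule nullity_rank)
    have "dim {y \<in> UNIV. \<forall>x\<in>K. orthogonal x y} + dim K = dim (UNIV :: (real^'m) set)"
      by (rule dim_subspace_orthogonal_to_vectors[OF subK subspace_UNIV]) simp
    then have dW: "dim W + dim K = CARD('m)" by (simp add: W_def)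
    have "dim {x + y |x y. x \<in> N \<and> y \<in> W} + dim (N \<inter> W) = dim N + dim W"
      by (rule dim_sums_Int[OF subN subW])
    moreover have "dim {x + y |x y. x \<in> N \<and> y \<in> W} \<le> CARD('m)" by (rule dim_subset_UNIV_cart)
    ultimately have "dim (N \<inter> W) \<noteq> 0" using dN dK dW lt by linarith
    then obtain v where v: "v \<in> N" "v \<in> W" "v \<noteq> 0" by (auto simp: dim_eq_0)
    have "C *v v = 0"
    proof -
      have "\<forall>b\<in>B. b \<bullet> v = 0" using v(2) B(1) by (auto simp: W_def orthogonal_def)
      then show ?thesis by (simp add: Cv)
    qed
    moreover have "A *v v = 0" using v(1) by (simp add: N_def)
    ultimately have "(transpose A ** A + C) *v v = 0" by (simp add: Gv)
    then show ?thesis using v(3) det_nz_iff_kernel by blast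
  qed
  show ?thesis using P1 P2 that by blast
qed



definition ispf :: "(real^'n \<Rightarrow> real) \<Rightarrow> bool" where "ispf f \<longleftrightarrow> (\<exists>d. pf d f)"

lemma ispf_const: "ispf (\<lambda>x. c)"
  unfolding ispf_def by (blast intro: pf.intros)

lemma ispf_coord: "ispf (\<lambda>x. x$i)"
  unfolding ispf_def by (blast intro: pf.intros order_refl)

lemma ispf_add: "ispf f \<Longrightarrow> ispf g \<Longrightarrow> ispf (\<lambda>x. f x + g x)"
  unfolding ispf_def
proof (elim exE)
  fix d e assume "pf d f" "pf e g"
  then have "pf (max d e) f" "pf (max d e) g" by (auto intro: pf_mono)
  then show "\<exists>d. pf d (\<lambda>x. f x + g x)" by (blast intro: pf.pf_add)
qed

lemma ispf_mul: "ispf f \<Longrightarrow> ispf g \<Longrightarrow> ispf (\<lambda>x. f x * g x)"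
  unfolding ispf_def by (blast intro: pf.pf_mul)

lemma ispf_sum: "finite A \<Longrightarrow> (\<forall>a\<in>A. ispf (f a)) \<Longrightarrow> ispf (\<lambda>x. \<Sum>a\<in>A. f a x)"
proof (induction A rule: finite_induct)
  case empty then show ?case by (simp add: ispf_const)
next
  case (insert a A)
  then show ?case by (simp add: ispf_add)
qed

lemma ispf_prod: "finite A \<Longrightarrow> (\<forall>a\<in>A. ispf (f a)) \<Longrightarrow> ispf (\<lambda>x. \<Prod>a\<in>A. f a x)"
proof (induction A rule: finite_induct)
  case empty then show ?case by (simp add: ispf_const)
next
  case (insert a A)
  then show ?case by (simp add: ispf_mul)
qed

lemma ispf_power: "ispf f \<Longrightarrow> ispf (\<lambda>x. f x ^ n)"
  by (induction n) (simp_all add: ispf_const ispf_mul)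

lemma poly_fun_ispf: "poly_fun f \<Longrightarrow> ispf f"
proof -
  assume "poly_fun f"
  then obtain E c where E: "finite E"
    and f: "\<forall>x. f x = (\<Sum>\<alpha>\<in>E. c \<alpha> * (\<Prod>i\<in>UNIV. (x $ i) ^ (\<alpha> i)))"
    unfolding poly_fun_def by blast
  have "f = (\<lambda>x. \<Sum>\<alpha>\<in>E. c \<alpha> * (\<Prod>i\<in>UNIV. (x $ i) ^ (\<alpha> i)))" using f by auto
  moreover have "ispf (\<lambda>x. \<Sum>\<alpha>\<in>E. c \<alpha> * (\<Prod>i\<in>UNIV. (x $ i) ^ (\<alpha> i)))"
    using E by (intro ispf_sum ballI ispf_mul ispf_const ispf_prod ispf_power ispf_coord) auto
  ultimately show ?thesis by simp
qed

lemma det_ispf: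
  fixes M :: "real^'n \<Rightarrow> real^'m^'m"
  assumes "\<forall>i j. ispf (\<lambda>x. M x $ i $ j)"
  shows "ispf (\<lambda>x. det (M x))"
  unfolding det_def
  using assms
  by (intro ispf_sum ballI ispf_mul ispf_const ispf_prod finite_permutations) auto

lemma generic_rank:
  fixes P :: "real^'n \<Rightarrow> real^'m^'k"
  assumes "matrix_poly P"
  shows "\<exists>R. (\<forall>\<xi>. rank (P \<xi>) \<le> R) \<and> negligible {\<xi>. rank (P \<xi>) < R}"
proof -
  have "\<exists>x. True \<and> (\<forall>y. True \<longrightarrow> rank (P y) \<le> rank (P x))"
    by (rule ex_has_greatest_nat[of "\<lambda>_. True" undefined "\<lambda>\<xi>. rank (P \<xi>)" "CARD('m) + 1"])
       (use rank_bound in \<open>auto simp: less_Suc_eq_le\<close>)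
  then obtain \<xi>0 where max: "\<And>\<xi>. rank (P \<xi>) \<le> rank (P \<xi>0)" by blast
  obtain C where C1: "det (transpose (P \<xi>0) ** P \<xi>0 + C) \<noteq> 0"
    and C2: "\<And>A::real^'m^'k. rank A < rank (P \<xi>0) \<Longrightarrow> det (transpose A ** A + C) = 0"
    using rank_det[of "P \<xi>0"] by blast
  define g where "g \<xi> = det (transpose (P \<xi>) ** P \<xi> + C)" for \<xi>
  have ent: "ispf (\<lambda>x. P x $ i $ j)" for i j
    using assms poly_fun_ispf unfolding matrix_poly_def by blast
  have "ispf g"
    unfolding g_def
  proof (rule det_ispf, intro allI)
    fix i j
    have "(\<lambda>x. (transpose (P x) ** P x + C) $ i $ j) = (\<lambda>x. (\<Sum>k\<in>UNIV. P x $ k $ i * P x $ k $ j) + C $ i $ j)"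
      by (simp add: matrix_matrix_mult_def transpose_def)
    moreover have "ispf (\<lambda>x. (\<Sum>k\<in>UNIV. P x $ k $ i * P x $ k $ j) + C $ i $ j)"
      by (intro ispf_add ispf_sum ballI ispf_mul ent ispf_const) auto
    ultimately show "ispf (\<lambda>x. (transpose (P x) ** P x + C) $ i $ j)" by simp
  qed
  then obtain d where "pf d g" unfolding ispf_def by blast
  moreover have "\<exists>x. g x \<noteq> 0" using C1 unfolding g_def by blast
  ultimately have "negligible {x. g x = 0}" by (rule pf_null)
  moreover have "{\<xi>. rank (P \<xi>) < rank (P \<xi>0)} \<subseteq> {x. g x = 0}"
    using C2 by (auto simp: g_def)
  ultimately show ?thesis using max negligible_subset by blast
qed

theorem lemma2p2:
  fixes S :: "(real^'n) set"
    and P :: "real^'n \<Rightarrow> real^'m^'k"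
    and Q :: "real^'n \<Rightarrow> real^'m2^'k2"
  assumes "S \<in> sets lebesgue" and "emeasure lebesgue S > 0"
    and "matrix_poly P" and "matrix_poly Q"
    and "\<forall>\<xi>\<in>S. rank (P \<xi>) + rank (Q \<xi>) = s"
  shows "(\<exists>r. \<forall>\<xi>\<in>S. rank (P \<xi>) = r) \<and> (\<exists>r. \<forall>\<xi>\<in>S. rank (Q \<xi>) = r)"
proof -
  obtain RP where RP: "\<And>\<xi>. rank (P \<xi>) \<le> RP" "negligible {\<xi>. rank (P \<xi>) < RP}"
    using generic_rank[OF assms(3)] by blast
  obtain RQ where RQ: "\<And>\<xi>. rank (Q \<xi>) \<le> RQ" "negligible {\<xi>. rank (Q \<xi>) < RQ}"
    using generic_rank[OF assms(4)] by blast
  have nS: "\<not> negligible S"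
    using assms(1,2) negligible_iff_emeasure0 by fastforce
  have "\<not> S \<subseteq> {\<xi>. rank (P \<xi>) < RP} \<union> {\<xi>. rank (Q \<xi>) < RQ}"
    using nS RP(2) RQ(2) negligible_Un negligible_subset by blast
  then obtain \<xi>1 where "\<xi>1 \<in> S" "\<not> rank (P \<xi>1) < RP" "\<not> rank (Q \<xi>1) < RQ" by blast
  then have s: "s = RP + RQ" using RP(1)[of \<xi>1] RQ(1)[of \<xi>1] assms(5) by force
  have "\<forall>\<xi>\<in>S. rank (P \<xi>) = RP \<and> rank (Q \<xi>) = RQ"
  proof
    fix \<xi> assume "\<xi> \<in> S"
    then have "rank (P \<xi>) + rank (Q \<xi>) = RP + RQ" using assms(5) s by simp
    then show "rank (P \<xi>) = RP \<and> rank (Q \<xi>) = RQ" using RP(1)[of \<xi>] RQ(1)[of \<xi>] by linarith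
  qed
  then show ?thesis by blast
qed

end
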